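(* Assume $x(0)=x'(0)=0$. Suppose that $y_2(t)=o(1/A(t))$ as $t\to\infty$ and $\int_0^\infty A(s)|y_2(s)|\,ds<\infty$. Then there exist constants $c_1,c_2$ such that \[ x(t)=\frac{c_1\sin(\omega t)+c_2\cos(\omega t)}{A(t)}+o\Big(\frac{1}{A(t)}\Big)\quad(t\to\infty). \]
   Context: Standing assumptions: $\omega>0$ is a constant; $p\in C^1([0,\infty))$ with $p(t)>0$ and $p'(t)<0$ for all $t\ge0$, $\int_0^\infty p(t)\,dt=\infty$ and $\int_0^\infty p(t)^2\,dt<\infty$; $f\in L^1_{\mathrm{loc}}([0,\infty))$. $x$ denotes the solution of $x''(t)+p(t)x'(t)+\omega^2x(t)=f(t)$, $t\ge0$. Notation: $A(t)=\exp(\frac12\int_0^tp(s)\,ds)$; $y_1(t)=\int_0^te^{-\omega^2(t-s)}f(s)\,ds$; $y_2(t)=\int_0^te^{-\omega^2(t-s)}y_1(s)\,ds=\int_0^t(t-s)e^{-\omega^2(t-s)}f(s)\,ds$. *)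

theory Defs
  imports "HOL-Analysis.Analysis" "HOL-Library.Landau_Symbols"
begin

definition Afun :: "(real \<Rightarrow> real) \<Rightarrow> real \<Rightarrow> real" where
  "Afun p t = exp ((1/2) * (LINT s:{0..t}|lborel. p s))"

definition y1fun :: "real \<Rightarrow> (real \<Rightarrow> real) \<Rightarrow> real \<Rightarrow> real" where
  "y1fun \<omega> f t = (LINT s:{0..t}|lborel. exp (- (\<omega>^2) * (t - s)) * f s)"

definition y2fun :: "real \<Rightarrow> (real \<Rightarrow> real) \<Rightarrow> real \<Rightarrow> real" where
  "y2fun \<omega> f t = (LINT s:{0..t}|lborel. exp (- (\<omega>^2) * (t - s)) * y1fun \<omega> f s)"

end

theory Submission
  imports Defs
begin

lemma set_integrable_cont_mult:
  fixes g E :: "real \<Rightarrow> real"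
  assumes g: "set_integrable lborel {a..b} g" and E: "continuous_on {a..b} E"
  shows "set_integrable lborel {a..b} (\<lambda>s. E s * g s)"
proof -
  obtain C where C: "\<And>s. s \<in> {a..b} \<Longrightarrow> norm (E s) \<le> C"
    using compact_imp_bounded[OF compact_continuous_image[OF E compact_Icc]]
    unfolding bounded_iff by fastforce
  have mE: "set_borel_measurable lborel {a..b} E"
    using set_measurable_continuous_on[OF _ E] by (simp add: set_borel_measurable_def)
  have mg: "set_borel_measurable lborel {a..b} g"
    using g by (simp add: set_borel_measurable_def set_integrable_def borel_measurable_integrable)
  have m: "set_borel_measurable lborel {a..b} (\<lambda>s. E s * g s)"
  proof -
    have "(\<lambda>s. (indicator {a..b} s *\<^sub>R E s) * (indicator {a..b} s *\<^sub>R g s)) \<in> borel_measurable lborel"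
      using mE mg unfolding set_borel_measurable_def by measurable
    moreover have "(\<lambda>s. (indicator {a..b} s *\<^sub>R E s) * (indicator {a..b} s *\<^sub>R g s)) = (\<lambda>s. indicator {a..b} s *\<^sub>R (E s * g s))"
      by (auto simp: indicator_def)
    ultimately show ?thesis unfolding set_borel_measurable_def by simp
  qed
  show ?thesis
    apply (rule set_integrable_bound[where f="\<lambda>s. C * g s"])
    using g apply simp
     apply (rule m)
    apply (rule AE_I2)
    using C by (auto simp: abs_mult intro!: mult_right_mono) (meson abs_ge_self order_trans)
qed


lemma FTC_Icc:
  fixes E E' :: "real \<Rightarrow> real"
  assumes ab: "a \<le> b"
    and dE: "\<And>s. s \<in> {a..b} \<Longrightarrow> (E has_real_derivative E' s) (at s within {a..b})"
    and cE': "continuous_on {a..b} E'"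
  shows "(LINT s:{a..b}|lborel. E' s) = E b - E a"
proof -
  have "(LBINT s=a..b. E' s) = E b - E a"
    apply (rule interval_integral_FTC_finite)
    using ab cE' dE by (auto simp: has_real_derivative_iff_has_vector_derivative[symmetric] min_def max_def)
  then show ?thesis using interval_integral_Icc[OF ab, of E'] by simp
qed

lemma ibp:
  fixes g E E' :: "real \<Rightarrow> real" and a b :: real
  assumes ab: "a \<le> b" and g: "set_integrable lborel {a..b} g"
    and dE: "\<And>s. s \<in> {a..b} \<Longrightarrow> (E has_real_derivative E' s) (at s within {a..b})"
    and cE': "continuous_on {a..b} E'"
  shows "E b * (LINT r:{a..b}|lborel. g r)
     = (LINT s:{a..b}|lborel. E' s * (LINT r:{a..s}|lborel. g r)) + (LINT s:{a..b}|lborel. E s * g s)"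
proof -
  define e where "e s = indicator {a..b} s * E' s" for s
  define gi where "gi r = indicator {a..b} r * g r" for r
  define F where "F s r = e s * of_bool (r \<le> s) * gi r" for s r
  have me[measurable]: "e \<in> borel_measurable lborel"
    using borel_measurable_continuous_on_indicator[OF _ cE'] unfolding e_def by simp
  have mgi[measurable]: "gi \<in> borel_measurable lborel"
    using g unfolding gi_def set_integrable_def by (simp add: borel_measurable_integrable)
  have igi: "integrable lborel gi"
    using g unfolding gi_def set_integrable_def by simp
  have cE: "continuous_on {a..b} E"
    using dE by (meson DERIV_continuous continuous_on_eq_continuous_within)
  obtain C where C: "\<And>s. s \<in> {a..b} \<Longrightarrow> norm (E' s) \<le> C"
    using compact_imp_bounded[OF compact_continuous_image[OF cE' compact_Icc]]
    unfolding bounded_iff by fastforce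
  have mF: "(\<lambda>(s,r). F s r) \<in> borel_measurable (lborel \<Otimes>\<^sub>M lborel)"
    unfolding F_def by measurable
  define Gb where "Gb s r = (indicator {a..b} s * C) * \<bar>gi r\<bar>" for s r
  have iGb: "integrable (lborel \<Otimes>\<^sub>M lborel) (\<lambda>(s,r). Gb s r)"
  proof (rule lborel_pair.Fubini_integrable)
    show "(\<lambda>(s,r). Gb s r) \<in> borel_measurable (lborel \<Otimes>\<^sub>M lborel)"
      unfolding Gb_def by measurable
    have "(\<lambda>s. \<integral>r. norm (case (s, r) of (s, r) \<Rightarrow> Gb s r) \<partial>lborel)
        = (\<lambda>s. indicator {a..b} s * (\<bar>C\<bar> * (\<integral>r. \<bar>gi r\<bar> \<partial>lborel)))"
      by (auto simp: Gb_def abs_mult indicator_def)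
    moreover have "integrable lborel (\<lambda>s. indicator {a..b} s * (\<bar>C\<bar> * (\<integral>r. \<bar>gi r\<bar> \<partial>lborel)))"
      using borel_integrable_atLeastAtMost'[of a b "\<lambda>_. \<bar>C\<bar> * (\<integral>r. \<bar>gi r\<bar> \<partial>lborel)"]
      by (simp add: set_integrable_def)
    ultimately show "integrable lborel (\<lambda>s. \<integral>r. norm (case (s, r) of (s, r) \<Rightarrow> Gb s r) \<partial>lborel)"
      by simp
    show "AE s in lborel. integrable lborel (\<lambda>r. case (s, r) of (s, r) \<Rightarrow> Gb s r)"
      using igi by (auto simp: Gb_def)
  qed
  have iF: "integrable (lborel \<Otimes>\<^sub>M lborel) (\<lambda>(s,r). F s r)"
  proof (rule Bochner_Integration.integrable_bound[OF iGb mF])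
    show "AE x in lborel \<Otimes>\<^sub>M lborel. norm (case x of (s, r) \<Rightarrow> F s r) \<le> norm (case x of (s, r) \<Rightarrow> Gb s r)"
    proof (rule AE_I2, clarify)
      fix s r
      have "\<bar>e s\<bar> \<le> indicator {a..b} s * C"
        using C by (auto simp: e_def indicator_def)
      have "norm (F s r) \<le> \<bar>e s\<bar> * \<bar>gi r\<bar>"
        by (simp add: F_def abs_mult)
      also have "\<dots> \<le> (indicator {a..b} s * C) * \<bar>gi r\<bar>"
        by (rule mult_right_mono) (fact, simp)
      also have "\<dots> = norm (Gb s r)"
        using \<open>\<bar>e s\<bar> \<le> indicator {a..b} s * C\<close> by (auto simp: Gb_def abs_mult indicator_def)
      finally show "norm (F s r) \<le> norm (Gb s r)" .
    qed
  qed
  have fub: "(\<integral>r. (\<integral>s. F s r \<partial>lborel) \<partial>lborel) = (\<integral>s. (\<integral>r. F s r \<partial>lborel) \<partial>lborel)"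
    using lborel_pair.Fubini_integral[OF iF] .
  have in1: "(\<integral>r. F s r \<partial>lborel) = indicator {a..b} s * (E' s * (LINT r:{a..s}|lborel. g r))" for s
  proof (cases "s \<in> {a..b}")
    case True
    have "(\<lambda>r. F s r) = (\<lambda>r. E' s * (indicator {a..s} r * g r))"
      using True by (auto simp: F_def e_def gi_def indicator_def fun_eq_iff)
    then show ?thesis using True by (simp add: set_lebesgue_integral_def)
  next
    case False
    then show ?thesis by (simp add: F_def e_def)
  qed
  have in2: "(\<integral>s. F s r \<partial>lborel) = indicator {a..b} r * g r * (E b - E r)" for r
  proof (cases "r \<in> {a..b}")
    case True
    have "(\<lambda>s. F s r) = (\<lambda>s. (indicator {r..b} s * E' s) * (g r))"
      using True by (auto simp: F_def e_def gi_def indicator_def fun_eq_iff)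
    moreover have "(LINT s:{r..b}|lborel. E' s) = E b - E r"
      apply (rule FTC_Icc)
      using True apply simp
      using True dE apply (meson atLeastAtMost_iff atLeastatMost_subset_iff has_field_derivative_subset order_refl subsetD)
      using True cE' by (meson atLeastAtMost_iff atLeastatMost_subset_iff continuous_on_subset order_refl)
    ultimately show ?thesis using True by (simp add: set_lebesgue_integral_def)
  next
    case False
    then show ?thesis by (simp add: F_def gi_def)
  qed
  have iEg: "set_integrable lborel {a..b} (\<lambda>s. E s * g s)"
    by (rule set_integrable_cont_mult[OF g cE])
  have "(\<integral>r. (\<integral>s. F s r \<partial>lborel) \<partial>lborel) = (\<integral>r. E b * (indicator {a..b} r * g r) - indicator {a..b} r * (E r * g r) \<partial>lborel)"
    unfolding in2 by (rule Bochner_Integration.integral_cong) (auto simp: algebra_simps)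
  also have "\<dots> = E b * (LINT r:{a..b}|lborel. g r) - (LINT s:{a..b}|lborel. E s * g s)"
    using g iEg by (simp add: set_lebesgue_integral_def set_integrable_def)
  finally have L: "(\<integral>r. (\<integral>s. F s r \<partial>lborel) \<partial>lborel) = E b * (LINT r:{a..b}|lborel. g r) - (LINT s:{a..b}|lborel. E s * g s)" .
  have R: "(\<integral>s. (\<integral>r. F s r \<partial>lborel) \<partial>lborel) = (LINT s:{a..b}|lborel. E' s * (LINT r:{a..s}|lborel. g r))"
    unfolding in1 by (simp add: set_lebesgue_integral_def)
  show ?thesis using fub L R by simp
qed


lemma D_LINT:
  fixes h :: "real \<Rightarrow> real"
  assumes "continuous_on {a..T} h" "s \<in> {a..T}"
  shows "((\<lambda>s. LINT r:{a..s}|lborel. h r) has_real_derivative h s) (at s within {a..T})"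
proof -
  have eq: "(LINT r:{a..v}|lborel. h r) = integral {a..v} h" if "v \<in> {a..T}" for v
  proof -
    have "continuous_on {a..v} h" using assms(1) that by (auto intro: continuous_on_subset)
    then show ?thesis using set_borel_integral_eq_integral(2)[OF borel_integrable_atLeastAtMost'] by blast
  qed
  show ?thesis
    apply (rule has_field_derivative_transform_within[OF integral_has_real_derivative[OF assms], where d=1])
    using assms eq by auto
qed

lemma cont_local:
  fixes h :: "real \<Rightarrow> real"
  assumes "\<And>T. T \<ge> 0 \<Longrightarrow> continuous_on {0..T} h"
  shows "continuous_on {0..} h"
  unfolding continuous_on_eq_continuous_within
proof
  fix s :: real assume s: "s \<in> {0..}"
  have eq: "at s within {0..} = at s within {0..s+1}"
    by (rule at_within_nhd[where S="{..<s+1}"]) (use s in auto)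
  have "continuous (at s within {0..s+1}) h"
    using assms[of "s+1"] s by (auto simp: continuous_on_eq_continuous_within)
  then show "continuous (at s within {0..}) h" using eq by (simp add: continuous_within)
qed


lemma main_identity:
  fixes \<omega> t :: real and p p' f x x' A u u1 y1 y2 g :: "real \<Rightarrow> real"
  assumes t: "t \<ge> 0"
    and dp: "\<And>s. s \<in> {0..t} \<Longrightarrow> (p has_real_derivative p' s) (at s within {0..t})"
    and cp': "continuous_on {0..t} p'"
    and dA: "\<And>s. s \<in> {0..t} \<Longrightarrow> (A has_real_derivative A s * (p s / 2)) (at s within {0..t})"
    and du: "\<And>s. (u has_real_derivative u1 s) (at s)"
    and du1: "\<And>s. (u1 has_real_derivative - (\<omega>^2 * u s)) (at s)"
    and fi: "set_integrable lborel {0..t} f"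
    and dx: "\<And>s. s \<in> {0..t} \<Longrightarrow> (x has_real_derivative x' s) (at s within {0..t})"
    and cx': "continuous_on {0..t} x'"
    and x0: "x 0 = 0"
    and g_def: "\<And>s. g s = f s - p s * x' s - \<omega>^2 * x s"
    and gi: "set_integrable lborel {0..t} g"
    and x'_eq: "\<And>s. s \<in> {0..t} \<Longrightarrow> x' s = (LINT r:{0..s}|lborel. g r)"
    and y1_eq: "\<And>s. s \<in> {0..t} \<Longrightarrow> y1 s = exp (- (\<omega>^2) * s) * (LINT r:{0..s}|lborel. exp (\<omega>^2 * r) * f r)"
    and cy1: "continuous_on {0..t} y1"
    and y2_eq: "\<And>s. s \<in> {0..t} \<Longrightarrow> y2 s = exp (- (\<omega>^2) * s) * (LINT r:{0..s}|lborel. exp (\<omega>^2 * r) * y1 r)"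
    and cy2: "continuous_on {0..t} y2"
  shows "A t * (u t * x' t + (p t / 2 * u t - u1 t) * x t)
       = A t * u t * y1 t - A t * (p t / 2 * u t + u1 t - \<omega>^2 * u t) * y2 t
         + (LINT s:{0..t}|lborel. A s * (p s^2/4*u s + p' s/2*u s + p s*u1 s - \<omega>^2*u s
              - 2*\<omega>^2*(p s/2*u s + u1 s) + \<omega>^4*u s) * y2 s)
         + (LINT s:{0..t}|lborel. A s * u s * (p s^2/4 + p' s/2) * x s)"
proof -
  let ?S = "{0..t}"
  define E where "E s = A s * u s" for s
  define E1 where "E1 s = A s * (p s/2 * u s + u1 s)" for s
  define E2 where "E2 s = A s * (p s^2/4*u s + p' s/2*u s + p s*u1 s - \<omega>^2*u s)" for s
  define Ep where "Ep s = A s * u s * p s" for s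
  define Ep1 where "Ep1 s = A s * (p s*(p s/2*u s + u1 s) + u s*p' s)" for s
  define H where "H s = A s * (p s / 2 * u s + u1 s - \<omega>^2 * u s)" for s
  define H1 where "H1 s = E2 s - \<omega>^2 * E1 s" for s
  define K where "K s = A s * (p s^2/4*u s + p' s/2*u s + p s*u1 s - \<omega>^2*u s
              - 2*\<omega>^2*(p s/2*u s + u1 s) + \<omega>^4*u s)" for s
  have du': "(u has_real_derivative u1 s) (at s within X)" for s X
    using du has_field_derivative_at_within by blast
  have du1': "(u1 has_real_derivative - (\<omega>^2 * u s)) (at s within X)" for s X
    using du1 has_field_derivative_at_within by blast
  have cA: "continuous_on ?S A"
    using dA by (meson DERIV_continuous continuous_on_eq_continuous_within)
  have cp: "continuous_on ?S p"
    using dp by (meson DERIV_continuous continuous_on_eq_continuous_within)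
  have cx: "continuous_on ?S x"
    using dx by (meson DERIV_continuous continuous_on_eq_continuous_within)
  have cu: "continuous_on UNIV u"
    using du by (meson DERIV_isCont continuous_at_imp_continuous_on)
  have cu1: "continuous_on UNIV u1"
    using du1 by (meson DERIV_isCont continuous_at_imp_continuous_on)
  have cu_S: "continuous_on ?S u" and cu1_S: "continuous_on ?S u1"
    using cu cu1 continuous_on_subset by blast+
  note conts = cA cp cp' cx cx' cu_S cu1_S cy1 cy2
  have dE: "(E has_real_derivative E1 s) (at s within ?S)" if "s \<in> ?S" for s
    unfolding E_def E1_def
    by (rule derivative_eq_intros dA[OF that] du' | simp add: algebra_simps)+
  have dE1: "(E1 has_real_derivative E2 s) (at s within ?S)" if "s \<in> ?S" for s
    unfolding E1_def E2_def
    by (auto intro!: derivative_eq_intros dA[OF that] du' du1' dp[OF that] simp: algebra_simps power2_eq_square)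
      (simp_all add: field_simps power2_eq_square)
  have dEp: "(Ep has_real_derivative Ep1 s) (at s within ?S)" if "s \<in> ?S" for s
    unfolding Ep_def Ep1_def
    by (auto intro!: derivative_eq_intros dA[OF that] du' du1' dp[OF that] simp: algebra_simps power2_eq_square)
  have dEe: "((\<lambda>s. E s * exp (- (\<omega>^2) * s)) has_real_derivative H s * exp (- (\<omega>^2) * s)) (at s within ?S)" if "s \<in> ?S" for s
    by (auto intro!: derivative_eq_intros dE[OF that]) (simp_all add: H_def E_def E1_def algebra_simps)
  have dH: "(H has_real_derivative H1 s) (at s within ?S)" if "s \<in> ?S" for s
  proof -
    have "H = (\<lambda>s. E1 s - \<omega>^2 * E s)" by (auto simp: H_def E1_def E_def fun_eq_iff algebra_simps)
    then show ?thesis unfolding H1_def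
      by (auto intro!: derivative_eq_intros dE[OF that] dE1[OF that])
  qed
  have dHe: "((\<lambda>s. H s * exp (- (\<omega>^2) * s)) has_real_derivative K s * exp (- (\<omega>^2) * s)) (at s within ?S)" if "s \<in> ?S" for s
    by (auto intro!: derivative_eq_intros dH[OF that])
      (simp_all add: H1_def K_def H_def E_def E1_def E2_def field_simps eval_nat_numeral)
  have cE: "continuous_on ?S E" unfolding E_def by (intro continuous_intros conts; simp)
  have cE1: "continuous_on ?S E1" unfolding E1_def by (intro continuous_intros conts; simp)
  have cE2: "continuous_on ?S E2" unfolding E2_def by (intro continuous_intros conts; simp)
  have cEp: "continuous_on ?S Ep" unfolding Ep_def by (intro continuous_intros conts; simp)
  have cEp1: "continuous_on ?S Ep1" unfolding Ep1_def by (intro continuous_intros conts; simp)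
  have cH: "continuous_on ?S H" unfolding H_def by (intro continuous_intros conts; simp)
  have cK: "continuous_on ?S K" unfolding K_def by (intro continuous_intros conts; simp)
  have cHe: "continuous_on ?S (\<lambda>s. H s * exp (- (\<omega>^2) * s))" by (intro continuous_intros cH)
  have cKe: "continuous_on ?S (\<lambda>s. K s * exp (- (\<omega>^2) * s))" by (intro continuous_intros cK)
  have expc: "exp (- (\<omega>^2) * s) * exp (\<omega>^2 * s) = 1" for s
    by (simp flip: exp_add)
  have expc': "exp (- (\<omega>^2 * s)) * (exp (\<omega>^2 * s) * z) = z" for s z
    by (simp add: mult.assoc[symmetric] flip: exp_add)
  have ix': "set_integrable lborel ?S x'" by (rule borel_integrable_atLeastAtMost'[OF cx'])
  have A1: "E t * x' t = (LINT s:?S|lborel. E1 s * x' s) + (LINT s:?S|lborel. E s * g s)"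
  proof -
    have "E t * (LINT r:?S|lborel. g r) = (LINT s:?S|lborel. E1 s * (LINT r:{0..s}|lborel. g r)) + (LINT s:?S|lborel. E s * g s)"
      by (rule ibp[OF t gi dE cE1])
    moreover have "(LINT s:?S|lborel. E1 s * (LINT r:{0..s}|lborel. g r)) = (LINT s:?S|lborel. E1 s * x' s)"
      by (rule set_lebesgue_integral_cong) (auto simp: x'_eq)
    moreover have "x' t = (LINT r:?S|lborel. g r)" using x'_eq t by simp
    ultimately show ?thesis by simp
  qed
  have x_eq: "x s = (LINT r:{0..s}|lborel. x' r)" if "s \<in> ?S" for s
  proof -
    have "(LINT r:{0..s}|lborel. x' r) = x s - x 0"
      apply (rule FTC_Icc)
      using that apply simp
      using that dx apply (meson atLeastAtMost_iff atLeastatMost_subset_iff has_field_derivative_subset order_refl subsetD)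
      using that cx' by (meson atLeastAtMost_iff atLeastatMost_subset_iff continuous_on_subset order_refl)
    then show ?thesis using x0 by simp
  qed
  have B1: "E1 t * x t = (LINT s:?S|lborel. E2 s * x s) + (LINT s:?S|lborel. E1 s * x' s)"
  proof -
    have "E1 t * (LINT r:?S|lborel. x' r) = (LINT s:?S|lborel. E2 s * (LINT r:{0..s}|lborel. x' r)) + (LINT s:?S|lborel. E1 s * x' s)"
      by (rule ibp[OF t ix' dE1 cE2])
    moreover have "(LINT s:?S|lborel. E2 s * (LINT r:{0..s}|lborel. x' r)) = (LINT s:?S|lborel. E2 s * x s)"
      by (rule set_lebesgue_integral_cong) (auto simp: x_eq)
    moreover have "x t = (LINT r:?S|lborel. x' r)" using x_eq t by simp
    ultimately show ?thesis by simp
  qed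
  have C1: "Ep t * x t = (LINT s:?S|lborel. Ep1 s * x s) + (LINT s:?S|lborel. Ep s * x' s)"
  proof -
    have "Ep t * (LINT r:?S|lborel. x' r) = (LINT s:?S|lborel. Ep1 s * (LINT r:{0..s}|lborel. x' r)) + (LINT s:?S|lborel. Ep s * x' s)"
      by (rule ibp[OF t ix' dEp cEp1])
    moreover have "(LINT s:?S|lborel. Ep1 s * (LINT r:{0..s}|lborel. x' r)) = (LINT s:?S|lborel. Ep1 s * x s)"
      by (rule set_lebesgue_integral_cong) (auto simp: x_eq)
    moreover have "x t = (LINT r:?S|lborel. x' r)" using x_eq t by simp
    ultimately show ?thesis by simp
  qed
  have iEf: "set_integrable lborel ?S (\<lambda>s. E s * f s)" by (rule set_integrable_cont_mult[OF fi cE])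
  have iEpx': "set_integrable lborel ?S (\<lambda>s. Ep s * x' s)"
    by (rule borel_integrable_atLeastAtMost') (intro continuous_intros cEp cx')
  have iEx: "set_integrable lborel ?S (\<lambda>s. E s * x s)"
    by (rule borel_integrable_atLeastAtMost') (intro continuous_intros cE cx)
  have iE2x: "set_integrable lborel ?S (\<lambda>s. E2 s * x s)"
    by (rule borel_integrable_atLeastAtMost') (intro continuous_intros cE2 cx)
  have iEp1x: "set_integrable lborel ?S (\<lambda>s. Ep1 s * x s)"
    by (rule borel_integrable_atLeastAtMost') (intro continuous_intros cEp1 cx)
  have G1: "(LINT s:?S|lborel. E s * g s) = (LINT s:?S|lborel. E s * f s) - (LINT s:?S|lborel. Ep s * x' s) - \<omega>^2 * (LINT s:?S|lborel. E s * x s)"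
  proof -
    have "(LINT s:?S|lborel. E s * g s) = (LINT s:?S|lborel. (E s * f s - Ep s * x' s) - \<omega>^2 * (E s * x s))"
      by (rule set_lebesgue_integral_cong) (auto simp: g_def Ep_def E_def algebra_simps)
    also have "\<dots> = (LINT s:?S|lborel. E s * f s - Ep s * x' s) - (LINT s:?S|lborel. \<omega>^2 * (E s * x s))"
      by (rule set_integral_diff(2)) (use iEf iEpx' iEx in auto)
    also have "\<dots> = (LINT s:?S|lborel. E s * f s) - (LINT s:?S|lborel. Ep s * x' s) - \<omega>^2 * (LINT s:?S|lborel. E s * x s)"
      using set_integral_diff(2)[OF iEf iEpx'] by simp
    finally show ?thesis .
  qed
  have D1: "E t * y1 t = (LINT s:?S|lborel. H s * y1 s) + (LINT s:?S|lborel. E s * f s)"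
  proof -
    have iexpf: "set_integrable lborel ?S (\<lambda>r. exp (\<omega>^2 * r) * f r)"
      by (rule set_integrable_cont_mult[OF fi]) (intro continuous_intros)
    have "(\<lambda>s. E s * exp (- (\<omega>^2) * s)) t * (LINT r:?S|lborel. exp (\<omega>^2 * r) * f r)
       = (LINT s:?S|lborel. (H s * exp (- (\<omega>^2) * s)) * (LINT r:{0..s}|lborel. exp (\<omega>^2 * r) * f r))
         + (LINT s:?S|lborel. (\<lambda>s. E s * exp (- (\<omega>^2) * s)) s * (exp (\<omega>^2 * s) * f s))"
      by (rule ibp[OF t iexpf dEe cHe])
    moreover have "(LINT s:?S|lborel. (H s * exp (- (\<omega>^2) * s)) * (LINT r:{0..s}|lborel. exp (\<omega>^2 * r) * f r))
       = (LINT s:?S|lborel. H s * y1 s)"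
      by (rule set_lebesgue_integral_cong) (auto simp: y1_eq)
    moreover have "(LINT s:?S|lborel. (\<lambda>s. E s * exp (- (\<omega>^2) * s)) s * (exp (\<omega>^2 * s) * f s))
       = (LINT s:?S|lborel. E s * f s)"
      by (rule set_lebesgue_integral_cong) (auto simp: expc' mult.assoc)
    moreover have "y1 t = exp (- (\<omega>^2) * t) * (LINT r:?S|lborel. exp (\<omega>^2 * r) * f r)"
      using y1_eq t by simp
    ultimately show ?thesis by (simp add: mult.assoc)
  qed
  have E1': "H t * y2 t = (LINT s:?S|lborel. K s * y2 s) + (LINT s:?S|lborel. H s * y1 s)"
  proof -
    have iexpy: "set_integrable lborel ?S (\<lambda>r. exp (\<omega>^2 * r) * y1 r)"
      by (rule borel_integrable_atLeastAtMost') (intro continuous_intros cy1)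
    have "(\<lambda>s. H s * exp (- (\<omega>^2) * s)) t * (LINT r:?S|lborel. exp (\<omega>^2 * r) * y1 r)
       = (LINT s:?S|lborel. (K s * exp (- (\<omega>^2) * s)) * (LINT r:{0..s}|lborel. exp (\<omega>^2 * r) * y1 r))
         + (LINT s:?S|lborel. (\<lambda>s. H s * exp (- (\<omega>^2) * s)) s * (exp (\<omega>^2 * s) * y1 s))"
      by (rule ibp[OF t iexpy dHe cKe])
    moreover have "(LINT s:?S|lborel. (K s * exp (- (\<omega>^2) * s)) * (LINT r:{0..s}|lborel. exp (\<omega>^2 * r) * y1 r))
       = (LINT s:?S|lborel. K s * y2 s)"
      by (rule set_lebesgue_integral_cong) (auto simp: y2_eq)
    moreover have "(LINT s:?S|lborel. (\<lambda>s. H s * exp (- (\<omega>^2) * s)) s * (exp (\<omega>^2 * s) * y1 s))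
       = (LINT s:?S|lborel. H s * y1 s)"
      by (rule set_lebesgue_integral_cong) (auto simp: expc' mult.assoc)
    moreover have "y2 t = exp (- (\<omega>^2) * t) * (LINT r:?S|lborel. exp (\<omega>^2 * r) * y1 r)"
      using y2_eq t by simp
    ultimately show ?thesis by (simp add: mult.assoc)
  qed
  have F1: "(LINT s:?S|lborel. Ep1 s * x s) - (LINT s:?S|lborel. E2 s * x s) - \<omega>^2 * (LINT s:?S|lborel. E s * x s)
      = (LINT s:?S|lborel. A s * u s * (p s^2/4 + p' s/2) * x s)"
  proof -
    have "(LINT s:?S|lborel. A s * u s * (p s^2/4 + p' s/2) * x s)
        = (LINT s:?S|lborel. (Ep1 s * x s - E2 s * x s) - \<omega>^2 * (E s * x s))"
      by (rule set_lebesgue_integral_cong) (auto simp: Ep1_def E2_def E_def algebra_simps power2_eq_square)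
    also have "\<dots> = (LINT s:?S|lborel. Ep1 s * x s - E2 s * x s) - (LINT s:?S|lborel. \<omega>^2 * (E s * x s))"
      by (rule set_integral_diff(2)) (use iEp1x iE2x iEx in auto)
    also have "\<dots> = (LINT s:?S|lborel. Ep1 s * x s) - (LINT s:?S|lborel. E2 s * x s) - \<omega>^2 * (LINT s:?S|lborel. E s * x s)"
      using set_integral_diff(2)[OF iEp1x iE2x] by simp
    finally show ?thesis by simp
  qed
  have fin: "E t * x' t - E1 t * x t + Ep t * x t = E t * y1 t - H t * y2 t + (LINT s:?S|lborel. K s * y2 s)
      + (LINT s:?S|lborel. A s * u s * (p s^2/4 + p' s/2) * x s)"
    using A1 B1 C1 G1 D1 E1' F1 by linarith
  show ?thesis using fin unfolding K_def by (simp add: E_def E1_def Ep_def H_def algebra_simps)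
qed


lemma set_integrable_bound_cont:
  fixes h k :: "real \<Rightarrow> real"
  assumes "continuous_on {0..} h" "set_integrable lborel {0..} k" "\<And>s. s \<ge> 0 \<Longrightarrow> \<bar>h s\<bar> \<le> k s"
  shows "set_integrable lborel {0..} h"
proof (rule set_integrable_bound[OF assms(2)])
  show "set_borel_measurable lborel {0..} h"
    using set_measurable_continuous_on[OF _ assms(1)] by (simp add: set_borel_measurable_def)
  show "AE x in lborel. x \<in> {0..} \<longrightarrow> norm (h x) \<le> norm (k x)"
    using assms(3) by (auto intro!: AE_I2 order_trans[OF _ abs_ge_self])
qed

lemma bounded_cont_tendsto0:
  fixes h :: "real \<Rightarrow> real"
  assumes "continuous_on {0..} h" "(h \<longlongrightarrow> 0) at_top"
  shows "\<exists>M. \<forall>t\<ge>0. \<bar>h t\<bar> \<le> M"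
proof -
  have "eventually (\<lambda>t. \<bar>h t\<bar> < 1) at_top"
    using assms(2) by (auto simp: tendsto_iff dist_real_def dest!: spec[of _ 1])
  then obtain T where T: "\<And>t. t \<ge> T \<Longrightarrow> \<bar>h t\<bar> < 1" by (auto simp: eventually_at_top_linorder)
  have hc: "continuous_on {0..max 0 T} h" using assms(1) by (rule continuous_on_subset) auto
  obtain C where C: "\<And>t. t \<in> {0..max 0 T} \<Longrightarrow> norm (h t) \<le> C"
    using compact_imp_bounded[OF compact_continuous_image[OF hc compact_Icc]]
    unfolding bounded_iff by fastforce
  show ?thesis
  proof (intro exI allI impI)
    fix t :: real assume "t \<ge> 0"
    show "\<bar>h t\<bar> \<le> max C 1"
    proof (cases "t \<le> max 0 T")
      case True then show ?thesis using C[of t] \<open>t \<ge> 0\<close> by auto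
    next
      case False
      then have "T \<le> t" by linarith
      then have "\<bar>h t\<bar> < 1" using T by blast
      then show ?thesis by linarith
    qed
  qed
qed

lemma set_integral_le_Ici:
  fixes \<beta> :: "real \<Rightarrow> real"
  assumes "set_integrable lborel {0..} \<beta>" "\<And>s. s \<ge> 0 \<Longrightarrow> \<beta> s \<ge> 0" "T \<ge> 0"
  shows "(LINT s:{0..T}|lborel. \<beta> s) \<le> (LINT s:{0..}|lborel. \<beta> s)"
proof -
  have i1: "set_integrable lborel {0..} (\<lambda>s. indicator {0..T} s * \<beta> s)"
  proof -
    have "set_integrable lborel {0..T} \<beta>" by (rule set_integrable_subset[OF assms(1)]) (use assms(3) in auto)
    moreover have "(\<lambda>s. indicator {0..} s *\<^sub>R (indicator {0..T} s * \<beta> s)) = (\<lambda>s. indicator {0..T} s *\<^sub>R \<beta> s)"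
      by (auto simp: indicator_def fun_eq_iff)
    ultimately show ?thesis by (simp add: set_integrable_def)
  qed
  have "(LINT s:{0..T}|lborel. \<beta> s) = (LINT s:{0..}|lborel. indicator {0..T} s * \<beta> s)"
    unfolding set_lebesgue_integral_def by (rule Bochner_Integration.integral_cong) (auto simp: indicator_def)
  also have "\<dots> \<le> (LINT s:{0..}|lborel. \<beta> s)"
    by (rule set_integral_mono[OF i1 assms(1)]) (auto simp: indicator_def assms(2))
  finally show ?thesis .
qed

lemma integrable_neg_deriv:
  fixes p p' :: "real \<Rightarrow> real"
  assumes dp: "\<And>t. t \<ge> 0 \<Longrightarrow> (p has_real_derivative p' t) (at t within {0..})"
    and cp': "continuous_on {0..} p'" and neg: "\<And>t. t \<ge> 0 \<Longrightarrow> p' t \<le> 0"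
    and pos: "\<And>t. t \<ge> 0 \<Longrightarrow> p t \<ge> 0"
  shows "set_integrable lborel {0..} p'"
proof -
  have dpT: "(p has_real_derivative p' s) (at s within {a..b})" if "0 \<le> a" "s \<in> {a..b}" for a b s
    using dp[of s] that by (auto intro: has_field_derivative_subset)
  have dec: "p b \<le> p a" if "0 \<le> a" "a \<le> b" for a b
  proof (cases "a < b")
    case True
    have "\<exists>z\<in>{a<..<b}. p b - p a = p' z * (b - a)"
      by (rule mvt_simple[OF True, of p "\<lambda>s. (*) (p' s)"])
         (use dpT[OF that(1)] in \<open>auto simp: has_field_derivative_def\<close>)
    then obtain z where z: "z \<in> {a<..<b}" "p b - p a = p' z * (b - a)" by blast
    have "p' z * (b - a) \<le> 0" using neg[of z] z(1) that True by (intro mult_nonpos_nonneg) auto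
    then show ?thesis using z by simp
  qed (use that in auto)
  have cpT: "continuous_on {a..b} p'" if "0 \<le> a" for a b using cp' by (rule continuous_on_subset) (use that in auto)
  define fn where "fn n s = indicator {0..real n} s * (- p' s)" for n :: nat and s :: real
  define u where "u s = indicator {0..} s * (- p' s)" for s :: real
  have int_n: "(LINT s:{0..real n}|lborel. - p' s) = p 0 - p (real n)" for n
  proof -
    have "(LINT s:{0..real n}|lborel. p' s) = p (real n) - p 0"
      by (rule FTC_Icc) (auto intro!: dpT cpT)
    then show ?thesis using set_integral_uminus[of lborel "{0..real n}" p'] borel_integrable_atLeastAtMost'[OF cpT[of 0 "real n"]] by simp
  qed
  have "convergent (\<lambda>n. p (real n))"
  proof (rule Bseq_monoseq_convergent)
    show "Bseq (\<lambda>n. p (real n))"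
      using pos dec by (intro BseqI'[of _ "p 0"]) (auto simp: abs_of_nonneg)
    show "monoseq (\<lambda>n. p (real n))"
      unfolding monoseq_def using dec by (auto intro!: disjI2)
  qed
  then obtain L where L: "(\<lambda>n. p (real n)) \<longlonglongrightarrow> L" by (auto simp: convergent_def)
  have "integrable lborel u"
  proof (rule integral_monotone_convergence_nonneg[where f=fn and x="p 0 - L"])
    show "integrable lborel (fn i)" for i
      using borel_integrable_atLeastAtMost'[OF continuous_on_minus[OF cpT[of 0 "real i"]]]
      by (simp add: fn_def[abs_def] set_integrable_def)
    show "AE x in lborel. mono (\<lambda>n. fn n x)"
      by (rule AE_I2) (auto simp: mono_def fn_def indicator_def neg intro!: mult_nonneg_nonneg)
    show "AE x in lborel. 0 \<le> fn i x" for i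
      by (rule AE_I2) (auto simp: fn_def indicator_def neg)
    show "AE x in lborel. (\<lambda>i. fn i x) \<longlonglongrightarrow> u x"
    proof (rule AE_I2)
      fix x :: real
      have "eventually (\<lambda>i. fn i x = u x) sequentially"
        unfolding eventually_sequentially
      proof (intro exI allI impI)
        fix i assume "nat \<lceil>x\<rceil> \<le> i"
        then have "x \<le> real i" by linarith
        then show "fn i x = u x" by (auto simp: fn_def u_def indicator_def)
      qed
      then show "(\<lambda>i. fn i x) \<longlonglongrightarrow> u x" by (rule tendsto_eventually)
    qed
    have "integral\<^sup>L lborel (fn i) = p 0 - p (real i)" for i
      using int_n[of i] by (simp add: fn_def[abs_def] set_lebesgue_integral_def)
    then show "(\<lambda>i. integral\<^sup>L lborel (fn i)) \<longlonglongrightarrow> p 0 - L"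
      using tendsto_diff[OF tendsto_const L, of "p 0"] by simp
    show "u \<in> borel_measurable lborel"
      using borel_measurable_continuous_on_indicator[OF _ continuous_on_minus[OF cp']]
      by (simp add: u_def[abs_def])
  qed
  then have "set_integrable lborel {0..} (\<lambda>s. - p' s)" by (simp add: u_def[abs_def] set_integrable_def)
  then show ?thesis using set_integrable_mult_right[of "-1" lborel "{0..}" "\<lambda>s. - p' s"] by simp
qed


lemma LINT_point: "(LINT r:{a}|lborel. f r) = (0::real)"
proof -
  have "AE r in lborel. indicator {a} r *\<^sub>R f r = 0"
    using AE_lborel_singleton[of a] by eventually_elim (auto simp: indicator_def)
  then show ?thesis unfolding set_lebesgue_integral_def by (rule integral_eq_zero_AE)
qed

lemma gronwall_bounded:
  fixes h \<beta> :: "real \<Rightarrow> real" and K :: real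
  assumes ch: "continuous_on {0..} h" and cb: "continuous_on {0..} \<beta>" and bnn: "\<And>s. s \<ge> 0 \<Longrightarrow> \<beta> s \<ge> 0"
    and bi: "set_integrable lborel {0..} \<beta>"
    and ineq: "\<And>t. t \<ge> 0 \<Longrightarrow> h t \<le> K + (LINT s:{0..t}|lborel. \<beta> s * h s)"
  shows "\<exists>M. \<forall>t\<ge>0. h t \<le> M"
proof -
  define Ib where "Ib = (LINT s:{0..}|lborel. \<beta> s)"
  have main: "h T \<le> \<bar>K\<bar> * exp Ib" if T: "T > 0" for T
  proof -
    define R where "R s = K + (LINT r:{0..s}|lborel. \<beta> r * h r)" for s
    define Bt where "Bt s = (LINT r:{0..s}|lborel. \<beta> r)" for s
    have chT: "continuous_on {0..T} h" using ch by (rule continuous_on_subset) auto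
    have cbT: "continuous_on {0..T} \<beta>" using cb by (rule continuous_on_subset) auto
    have dR: "(R has_real_derivative \<beta> s * h s) (at s within {0..T})" if "s \<in> {0..T}" for s
    proof -
      have "((\<lambda>s. K + (LINT r:{0..s}|lborel. \<beta> r * h r)) has_real_derivative 0 + \<beta> s * h s) (at s within {0..T})"
        by (rule DERIV_add[OF DERIV_const D_LINT[OF continuous_on_mult[OF cbT chT] that]])
      then show ?thesis by (simp add: R_def[abs_def])
    qed
    have dB: "(Bt has_real_derivative \<beta> s) (at s within {0..T})" if "s \<in> {0..T}" for s
      using D_LINT[OF cbT that] by (simp add: Bt_def[abs_def])
    define Q' where "Q' s = \<beta> s * exp (- Bt s) * (h s - R s)" for s
    have dQ: "((\<lambda>s. R s * exp (- Bt s)) has_real_derivative Q' s) (at s within {0..T})" if "s \<in> {0..T}" for s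
      by (auto intro!: derivative_eq_intros dR[OF that] dB[OF that]) (simp_all add: Q'_def algebra_simps)
    have "\<exists>z\<in>{0<..<T}. R T * exp (- Bt T) - R 0 * exp (- Bt 0) = Q' z * (T - 0)"
      by (rule mvt_simple[OF T, of "\<lambda>s. R s * exp (- Bt s)" "\<lambda>s. (*) (Q' s)"])
         (use dQ in \<open>auto simp: has_field_derivative_def\<close>)
    then obtain z where z: "z \<in> {0<..<T}" "R T * exp (- Bt T) - R 0 * exp (- Bt 0) = Q' z * T" by auto
    have "Q' z \<le> 0"
      unfolding Q'_def using bnn[of z] ineq[of z] z(1)
      by (intro mult_nonneg_nonpos) (auto simp: R_def)
    then have "Q' z * T \<le> 0" using T by (simp add: mult_nonpos_nonneg)
    moreover have "R 0 = K" "Bt 0 = 0" by (simp_all add: R_def Bt_def LINT_point)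
    ultimately have "R T * exp (- Bt T) \<le> K" using z by simp
    then have "R T \<le> K * exp (Bt T)" by (simp add: exp_minus field_simps)
    also have "\<dots> \<le> \<bar>K\<bar> * exp (Bt T)" by (simp add: mult_right_mono)
    also have "\<dots> \<le> \<bar>K\<bar> * exp Ib"
      unfolding Bt_def Ib_def using set_integral_le_Ici[OF bi bnn, of T] T
      by (intro mult_left_mono) auto
    finally show ?thesis using ineq[of T] T by (simp add: R_def)
  qed
  show ?thesis
  proof (intro exI allI impI)
    fix t :: real assume "t \<ge> 0"
    then show "h t \<le> max (\<bar>K\<bar> * exp Ib) (h 0)"
      using main[of t] by (cases "t = 0") auto
  qed
qed


lemma set_abs_bound:
  fixes f :: "'a \<Rightarrow> real"
  shows "\<bar>LINT x:A|M. f x\<bar> \<le> (LINT x:A|M. \<bar>f x\<bar>)"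
proof -
  have "(\<lambda>x. \<bar>indicator A x *\<^sub>R f x\<bar>) = (\<lambda>x. indicator A x *\<^sub>R \<bar>f x\<bar>)"
    by (auto simp: indicator_def fun_eq_iff)
  then show ?thesis
    using integral_abs_bound[of M "\<lambda>x. indicator A x *\<^sub>R f x"]
    unfolding set_lebesgue_integral_def by simp
qed

lemma abs_LINT_le_Ici:
  fixes h :: "real \<Rightarrow> real"
  assumes "set_integrable lborel {0..} h" "T \<ge> 0"
  shows "\<bar>LINT s:{0..T}|lborel. h s\<bar> \<le> (LINT s:{0..}|lborel. \<bar>h s\<bar>)"
  using set_abs_bound[of lborel "{0..T}" h] set_integral_le_Ici[OF set_integrable_abs[OF assms(1)] _ assms(2)]
  by auto

lemma cont_indef:
  fixes h :: "real \<Rightarrow> real"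
  assumes "set_integrable lborel {0..T} h"
  shows "continuous_on {0..T} (\<lambda>s. LINT r:{0..s}|lborel. h r)"
proof -
  have "continuous_on {0..T} (\<lambda>s. integral {0..s} h)"
    by (rule indefinite_integral_continuous_1[OF set_borel_integral_eq_integral(1)[OF assms]])
  moreover have "(LINT r:{0..s}|lborel. h r) = integral {0..s} h" if "s \<in> {0..T}" for s
  proof -
    have "set_integrable lborel {0..s} h" by (rule set_integrable_subset[OF assms]) (use that in auto)
    then show ?thesis by (rule set_borel_integral_eq_integral(2))
  qed
  ultimately show ?thesis using continuous_on_eq by (metis (no_types, lifting))
qed

lemma dec_of_deriv:
  fixes p p' :: "real \<Rightarrow> real"
  assumes dp: "\<And>t. t \<ge> 0 \<Longrightarrow> (p has_real_derivative p' t) (at t within {0..})"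
    and neg: "\<And>t. t \<ge> 0 \<Longrightarrow> p' t \<le> 0" and ab: "0 \<le> a" "a \<le> b"
  shows "p b \<le> p a"
proof (cases "a < b")
  case True
  have dpT: "(p has_real_derivative p' s) (at s within {a..b})" if "s \<in> {a..b}" for s
    using dp[of s] that ab by (auto intro: has_field_derivative_subset)
  have "\<exists>z\<in>{a<..<b}. p b - p a = p' z * (b - a)"
    by (rule mvt_simple[OF True, of p "\<lambda>s. (*) (p' s)"])
       (use dpT in \<open>auto simp: has_field_derivative_def\<close>)
  then obtain z where z: "z \<in> {a<..<b}" "p b - p a = p' z * (b - a)" by blast
  have "p' z * (b - a) \<le> 0" using neg[of z] z(1) ab True by (intro mult_nonpos_nonneg) auto
  then show ?thesis using z by simp
qed (use ab in auto)


lemma poly_bound: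
  fixes P P' U U1 w P0 :: real
  assumes P: "0 \<le> P" "P \<le> P0" and U: "\<bar>U\<bar> \<le> 1" and U1: "\<bar>U1\<bar> \<le> w" and w: "w > 0"
  shows "\<bar>P^2/4*U + P'/2*U + P*U1 - w^2*U - 2*w^2*(P/2*U + U1) + w^4*U\<bar>
          \<le> (P0^2/4 + P0*w + w^2 + 2*w^2*(P0/2 + w) + w^4) + \<bar>P'\<bar>/2"
    and "\<bar>P/2*U + U1 - w^2*U\<bar> \<le> P0/2 + w + w^2"
proof -
  have b1: "\<bar>P^2/4*U\<bar> \<le> P0^2/4"
  proof -
    have "\<bar>P^2/4*U\<bar> = P^2/4*\<bar>U\<bar>" by (simp add: abs_mult)
    also have "\<dots> \<le> P^2/4" using U by (simp add: mult_left_le)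
    also have "\<dots> \<le> P0^2/4" using P by (simp add: power_mono)
    finally show ?thesis .
  qed
  have b2: "\<bar>P'/2*U\<bar> \<le> \<bar>P'\<bar>/2"
    using U by (simp add: abs_mult mult_left_le)
  have b3: "\<bar>P*U1\<bar> \<le> P0*w"
    using P U1 by (simp add: abs_mult mult_mono)
  have b4: "\<bar>w^2*U\<bar> \<le> w^2"
    using U by (simp add: abs_mult mult_left_le)
  have b7: "\<bar>P/2*U\<bar> \<le> P0/2"
    using P U by (simp add: abs_mult mult_le_one) (metis abs_of_nonneg mult_left_le order_trans)
  have b5: "\<bar>2*w^2*(P/2*U + U1)\<bar> \<le> 2*w^2*(P0/2 + w)"
  proof -
    have "\<bar>P/2*U + U1\<bar> \<le> P0/2 + w" using b7 U1 by (simp add: abs_le_iff) linarith?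
    then show ?thesis by (simp add: abs_mult mult_left_mono)
  qed
  have b6: "\<bar>w^4*U\<bar> \<le> w^4"
    using U by (simp add: abs_mult mult_left_le)
  show "\<bar>P^2/4*U + P'/2*U + P*U1 - w^2*U - 2*w^2*(P/2*U + U1) + w^4*U\<bar>
          \<le> (P0^2/4 + P0*w + w^2 + 2*w^2*(P0/2 + w) + w^4) + \<bar>P'\<bar>/2"
    using b1 b2 b3 b4 b5 b6 unfolding abs_le_iff by linarith
  show "\<bar>P/2*U + U1 - w^2*U\<bar> \<le> P0/2 + w + w^2"
    using b7 U1 b4 unfolding abs_le_iff by linarith
qed

theorem mainTheorem19:
  fixes \<omega> :: real and p p' f x x' :: "real \<Rightarrow> real"
  assumes \<omega>_pos: "\<omega> > 0"
    and p_deriv: "\<And>t. t \<ge> 0 \<Longrightarrow> (p has_real_derivative p' t) (at t within {0..})"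
    and p'_cont: "continuous_on {0..} p'"
    and p_pos: "\<And>t. t \<ge> 0 \<Longrightarrow> p t > 0"
    and p'_neg: "\<And>t. t \<ge> 0 \<Longrightarrow> p' t < 0"
    and p_int_infinite: "(\<integral>\<^sup>+ t\<in>{0..}. ennreal (p t) \<partial>lborel) = \<infinity>"
    and p_sq_int: "set_integrable lborel {0..} (\<lambda>t. (p t)^2)"
    and f_loc: "\<And>t. t \<ge> 0 \<Longrightarrow> set_integrable lborel {0..t} f"
    and x_deriv: "\<And>t. t \<ge> 0 \<Longrightarrow> (x has_real_derivative x' t) (at t within {0..})"
    and x'_integrable: "\<And>t. t \<ge> 0 \<Longrightarrow>
          set_integrable lborel {0..t} (\<lambda>s. f s - p s * x' s - \<omega>^2 * x s)"
    and x'_eq: "\<And>t. t \<ge> 0 \<Longrightarrow>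
          x' t = x' 0 + (LINT s:{0..t}|lborel. f s - p s * x' s - \<omega>^2 * x s)"
    and x0: "x 0 = 0" and x'0: "x' 0 = 0"
    and y2_small: "y2fun \<omega> f \<in> o[at_top](\<lambda>t. 1 / Afun p t)"
    and Ay2_int: "set_integrable lborel {0..} (\<lambda>s. Afun p s * \<bar>y2fun \<omega> f s\<bar>)"
  shows "\<exists>c1 c2. (\<lambda>t. x t - (c1 * sin (\<omega> * t) + c2 * cos (\<omega> * t)) / Afun p t)
                   \<in> o[at_top](\<lambda>t. 1 / Afun p t)"
proof -
  define A where "A = Afun p"
  define y1 where "y1 = y1fun \<omega> f"
  define y2 where "y2 = y2fun \<omega> f"
  define P where "P s = (LINT r:{0..s}|lborel. p r)" for s
  define g where "g s = f s - p s * x' s - \<omega>^2 * x s" for s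
  have dpT: "(p has_real_derivative p' s) (at s within {0..T})" if "s \<in> {0..T}" for s T
    using p_deriv[of s] that by (auto intro: has_field_derivative_subset)
  have cp: "continuous_on {0..} p"
    using p_deriv by (meson DERIV_continuous continuous_on_eq_continuous_within atLeast_iff)
  have cpT: "continuous_on {0..T} p" for T using cp by (rule continuous_on_subset) auto
  have cp'T: "continuous_on {0..T} p'" for T using p'_cont by (rule continuous_on_subset) auto
  have p_le: "p s \<le> p 0" if "s \<ge> 0" for s
    using dec_of_deriv[OF p_deriv _ _ that] p'_neg by (simp add: less_imp_le)
  have ip': "set_integrable lborel {0..} p'"
    by (rule integrable_neg_deriv[OF p_deriv p'_cont]) (auto simp: less_imp_le p'_neg p_pos)
  have Aeq: "A = (\<lambda>s. exp ((1/2) * P s))" by (simp add: fun_eq_iff A_def Afun_def P_def)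
  have dA: "(A has_real_derivative A s * (p s / 2)) (at s within {0..T})" if "s \<in> {0..T}" for s T
  proof -
    have dP: "(P has_real_derivative p s) (at s within {0..T})"
      using D_LINT[OF cpT that] by (simp add: P_def[abs_def])
    have "((\<lambda>s. exp ((1/2) * P s)) has_real_derivative exp ((1/2) * P s) * ((1/2) * p s)) (at s within {0..T})"
      by (rule DERIV_chain2[OF DERIV_exp DERIV_cmult[OF dP]])
    then show ?thesis by (simp add: Aeq)
  qed
  have A_pos: "A s > 0" for s by (simp add: Aeq)
  have cAT: "continuous_on {0..T} A" for T
    using dA by (meson DERIV_continuous continuous_on_eq_continuous_within)
  have cA: "continuous_on {0..} A" by (rule cont_local[OF cAT])
  have cx: "continuous_on {0..} x"
    using x_deriv by (meson DERIV_continuous continuous_on_eq_continuous_within atLeast_iff)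
  have cxT: "continuous_on {0..T} x" for T using cx by (rule continuous_on_subset) auto
  have dxT: "(x has_real_derivative x' s) (at s within {0..T})" if "s \<in> {0..T}" for s T
    using x_deriv[of s] that by (auto intro: has_field_derivative_subset)
  have giT: "set_integrable lborel {0..T} g" if "T \<ge> 0" for T
    using x'_integrable[OF that] by (simp add: g_def[abs_def])
  have x'eq: "x' s = (LINT r:{0..s}|lborel. g r)" if "s \<ge> 0" for s
    using x'_eq[OF that] x'0 by (simp add: g_def)
  have cx'T: "continuous_on {0..T} x'" if "T \<ge> 0" for T
    using cont_indef[OF giT[OF that]] by (rule continuous_on_eq) (auto simp: x'eq)
  have cx': "continuous_on {0..} x'"
    by (rule cont_local[OF cx'T])
  have fT: "set_integrable lborel {0..T} f" if "T \<ge> 0" for T using f_loc that by blast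
  have expsplit: "exp (- (\<omega>^2) * (s - r)) = exp (- (\<omega>^2) * s) * exp (\<omega>^2 * r)" for s r
    by (simp add: exp_add[symmetric] algebra_simps)
  have expsplit': "exp (- (\<omega>^2 * (s - r))) = exp (- (\<omega>^2 * s)) * exp (\<omega>^2 * r)" for s r
    using expsplit by simp
  have y1eq: "y1 s = exp (- (\<omega>^2) * s) * (LINT r:{0..s}|lborel. exp (\<omega>^2 * r) * f r)" for s
  proof -
    have "(\<lambda>r. exp (- (\<omega>^2) * (s - r)) * f r) = (\<lambda>r. exp (- (\<omega>^2) * s) * (exp (\<omega>^2 * r) * f r))"
      by (auto simp: fun_eq_iff expsplit')
    then show ?thesis by (simp add: y1_def y1fun_def)
  qed
  have y2eq: "y2 s = exp (- (\<omega>^2) * s) * (LINT r:{0..s}|lborel. exp (\<omega>^2 * r) * y1 r)" for s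
  proof -
    have "(\<lambda>r. exp (- (\<omega>^2) * (s - r)) * y1 r) = (\<lambda>r. exp (- (\<omega>^2) * s) * (exp (\<omega>^2 * r) * y1 r))"
      by (auto simp: fun_eq_iff expsplit')
    then show ?thesis by (simp add: y2_def y2fun_def y1_def)
  qed
  have cy1T: "continuous_on {0..T} y1" if "T \<ge> 0" for T
  proof -
    have "set_integrable lborel {0..T} (\<lambda>r. exp (\<omega>^2 * r) * f r)"
      by (rule set_integrable_cont_mult[OF fT[OF that]]) (intro continuous_intros)
    from cont_indef[OF this] show ?thesis
      unfolding y1eq by (intro continuous_intros)
  qed
  have cy1: "continuous_on {0..} y1" by (rule cont_local[OF cy1T])
  have cy2T: "continuous_on {0..T} y2" if "T \<ge> 0" for T
  proof -
    have "set_integrable lborel {0..T} (\<lambda>r. exp (\<omega>^2 * r) * y1 r)"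
      by (rule borel_integrable_atLeastAtMost') (intro continuous_intros cy1T that)
    from cont_indef[OF this] show ?thesis
      unfolding y2eq by (intro continuous_intros)
  qed
  have cy2: "continuous_on {0..} y2" by (rule cont_local[OF cy2T])
  define Hf where "Hf u u1 s = A s * (p s / 2 * u s + u1 s - \<omega>^2 * u s)" for u u1 :: "real \<Rightarrow> real" and s
  define Kf where "Kf u u1 s = A s * (p s^2/4*u s + p' s/2*u s + p s*u1 s - \<omega>^2*u s
              - 2*\<omega>^2*(p s/2*u s + u1 s) + \<omega>^4*u s)" for u u1 :: "real \<Rightarrow> real" and s
  define Rf where "Rf u u1 t = - (Hf u u1 t * y2 t) + (LINT s:{0..t}|lborel. Kf u u1 s * y2 s)
       + (LINT s:{0..t}|lborel. A s * u s * (p s^2/4 + p' s/2) * x s)" for u u1 :: "real \<Rightarrow> real" and t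
  have ident: "A t * (u t * x' t + (p t / 2 * u t - u1 t) * x t) = A t * u t * y1 t + Rf u u1 t"
    if du: "\<And>s. (u has_real_derivative u1 s) (at s)"
      and du1: "\<And>s. (u1 has_real_derivative - (\<omega>^2 * u s)) (at s)"
      and t: "t \<ge> 0" for u u1 t
  proof -
    have "A t * (u t * x' t + (p t / 2 * u t - u1 t) * x t)
       = A t * u t * y1 t - A t * (p t / 2 * u t + u1 t - \<omega>^2 * u t) * y2 t
         + (LINT s:{0..t}|lborel. A s * (p s^2/4*u s + p' s/2*u s + p s*u1 s - \<omega>^2*u s
              - 2*\<omega>^2*(p s/2*u s + u1 s) + \<omega>^4*u s) * y2 s)
         + (LINT s:{0..t}|lborel. A s * u s * (p s^2/4 + p' s/2) * x s)"
      by (rule main_identity[OF t dpT cp'T dA du du1 fT[OF t] dxT cx'T[OF t] x0 g_def giT[OF t] x'eq y1eq cy1T[OF t] y2eq cy2T[OF t]])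
         auto
    then show ?thesis by (simp add: Rf_def Hf_def Kf_def)
  qed
  define c where "c = (\<lambda>s. cos (\<omega> * s))"
  define c1 where "c1 = (\<lambda>s. - (\<omega> * sin (\<omega> * s)))"
  define sn where "sn = (\<lambda>s. sin (\<omega> * s))"
  define s1 where "s1 = (\<lambda>s. \<omega> * cos (\<omega> * s))"
  have dc: "(c has_real_derivative c1 s) (at s)" for s
    unfolding c_def c1_def by (auto intro!: derivative_eq_intros)
  have dc1: "(c1 has_real_derivative - (\<omega>^2 * c s)) (at s)" for s
    unfolding c_def c1_def by (auto intro!: derivative_eq_intros simp: power2_eq_square)
  have ds: "(sn has_real_derivative s1 s) (at s)" for s
    unfolding sn_def s1_def by (auto intro!: derivative_eq_intros)
  have ds1: "(s1 has_real_derivative - (\<omega>^2 * sn s)) (at s)" for s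
    unfolding sn_def s1_def by (auto intro!: derivative_eq_intros simp: power2_eq_square)
  have Bid: "\<omega> * (A t * x t) = sin (\<omega> * t) * Rf c c1 t - cos (\<omega> * t) * Rf sn s1 t" if t: "t \<ge> 0" for t
  proof -
    have Ic: "Rf c c1 t = A t * (c t * x' t + (p t / 2 * c t - c1 t) * x t) - A t * c t * y1 t"
      using ident[OF dc dc1 t] by linarith
    have Is: "Rf sn s1 t = A t * (sn t * x' t + (p t / 2 * sn t - s1 t) * x t) - A t * sn t * y1 t"
      using ident[OF ds ds1 t] by linarith
    have cs: "cos (\<omega> * t) * cos (\<omega> * t) = 1 - sin (\<omega> * t) * sin (\<omega> * t)"
      using sin_cos_squared_add[of "\<omega> * t"] by (simp add: power2_eq_square)
    have "sin (\<omega> * t) * Rf c c1 t - cos (\<omega> * t) * Rf sn s1 t = \<omega> * (A t * x t)"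
      unfolding Ic Is by (simp add: c_def c1_def sn_def s1_def algebra_simps cs)
    then show ?thesis by simp
  qed
  have p_abs: "\<bar>p s\<bar> \<le> p 0" if "s \<ge> 0" for s using p_le[OF that] p_pos[OF that] by simp
  have Ay2lim: "((\<lambda>t. A t * y2 t) \<longlongrightarrow> 0) at_top"
  proof -
    have "((\<lambda>t. y2 t / (1 / A t)) \<longlongrightarrow> 0) at_top"
      using smalloD_tendsto[OF y2_small] by (simp add: A_def y2_def)
    moreover have "(\<lambda>t. y2 t / (1 / A t)) = (\<lambda>t. A t * y2 t)" by (auto simp: fun_eq_iff)
    ultimately show ?thesis by simp
  qed
  have cAy2: "continuous_on {0..} (\<lambda>t. A t * y2 t)" by (intro continuous_intros cA cy2)
  obtain M2 where M2: "\<And>t. t \<ge> 0 \<Longrightarrow> \<bar>A t * y2 t\<bar> \<le> M2"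
    using bounded_cont_tendsto0[OF cAy2 Ay2lim] by blast
  have M2nn: "M2 \<ge> 0" using M2[of 0] by simp
  have iAy2: "set_integrable lborel {0..} (\<lambda>s. \<bar>A s * y2 s\<bar>)"
  proof -
    have "(\<lambda>s. \<bar>A s * y2 s\<bar>) = (\<lambda>s. A s * \<bar>y2 s\<bar>)"
      using A_pos by (auto simp: fun_eq_iff abs_mult less_imp_le)
    then show ?thesis using Ay2_int by (simp add: A_def y2_def)
  qed
  define q where "q s = p s^2/4 + p' s/2" for s
  have cq: "continuous_on {0..} q" unfolding q_def by (intro continuous_intros cp p'_cont) auto
  have iq: "set_integrable lborel {0..} q"
  proof (rule set_integrable_bound_cont[OF cq])
    show "set_integrable lborel {0..} (\<lambda>s. p s^2 + \<bar>p' s\<bar>)"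
      by (rule set_integral_add(1)[OF p_sq_int set_integrable_abs[OF ip']])
    show "\<bar>q s\<bar> \<le> p s^2 + \<bar>p' s\<bar>" for s
      unfolding q_def abs_le_iff using zero_le_power2[of "p s"] abs_ge_self[of "p' s"] abs_ge_minus_self[of "p' s"]
      by (intro conjI) linarith+
  qed
  have iqa: "set_integrable lborel {0..} (\<lambda>s. \<bar>q s\<bar>)" by (rule set_integrable_abs[OF iq])
  define C0 where "C0 = p 0^2/4 + p 0*\<omega> + \<omega>^2 + 2*\<omega>^2*(p 0/2 + \<omega>) + \<omega>^4"
  define CH where "CH = p 0/2 + \<omega> + \<omega>^2"
  have Kbound: "\<bar>Kf u u1 s * y2 s\<bar> \<le> C0 * \<bar>A s * y2 s\<bar> + M2 * \<bar>p' s\<bar>"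
    if bu: "\<And>s. \<bar>u s\<bar> \<le> 1" "\<And>s. \<bar>u1 s\<bar> \<le> \<omega>" and s: "s \<ge> 0" for u u1 s
  proof -
    have pb: "\<bar>p s^2/4*u s + p' s/2*u s + p s*u1 s - \<omega>^2*u s - 2*\<omega>^2*(p s/2*u s + u1 s) + \<omega>^4*u s\<bar> \<le> C0 + \<bar>p' s\<bar>/2"
      unfolding C0_def using poly_bound(1)[of "p s" "p 0" "u s" "u1 s" \<omega> "p' s"] p_pos[OF s] p_le[OF s] bu \<omega>_pos
      by auto
    have "\<bar>Kf u u1 s * y2 s\<bar> = \<bar>A s * y2 s\<bar> * \<bar>p s^2/4*u s + p' s/2*u s + p s*u1 s - \<omega>^2*u s - 2*\<omega>^2*(p s/2*u s + u1 s) + \<omega>^4*u s\<bar>"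
      by (simp add: Kf_def abs_mult)
    also have "\<dots> \<le> \<bar>A s * y2 s\<bar> * (C0 + \<bar>p' s\<bar>/2)" by (rule mult_left_mono[OF pb]) simp
    also have "\<dots> = C0 * \<bar>A s * y2 s\<bar> + \<bar>A s * y2 s\<bar> * \<bar>p' s\<bar> / 2" by (simp add: algebra_simps)
    also have "\<dots> \<le> C0 * \<bar>A s * y2 s\<bar> + M2 * \<bar>p' s\<bar>"
    proof -
      have "\<bar>A s * y2 s\<bar> * \<bar>p' s\<bar> \<le> M2 * \<bar>p' s\<bar>" by (rule mult_right_mono[OF M2[OF s]]) simp
      moreover have "0 \<le> M2 * \<bar>p' s\<bar>" using M2nn by simp
      ultimately show ?thesis by linarith
    qed
    finally show ?thesis .
  qed
  have Hbound: "\<bar>Hf u u1 t * y2 t\<bar> \<le> \<bar>A t * y2 t\<bar> * CH"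
    if bu: "\<And>s. \<bar>u s\<bar> \<le> 1" "\<And>s. \<bar>u1 s\<bar> \<le> \<omega>" and t: "t \<ge> 0" for u u1 t
  proof -
    have pb: "\<bar>p t / 2 * u t + u1 t - \<omega>^2 * u t\<bar> \<le> CH"
      unfolding CH_def using poly_bound(2)[of "p t" "p 0" "u t" "u1 t" \<omega>] p_pos[OF t] p_le[OF t] bu \<omega>_pos
      by auto
    have "\<bar>Hf u u1 t * y2 t\<bar> = \<bar>A t * y2 t\<bar> * \<bar>p t / 2 * u t + u1 t - \<omega>^2 * u t\<bar>"
      by (simp add: Hf_def abs_mult)
    also have "\<dots> \<le> \<bar>A t * y2 t\<bar> * CH" by (rule mult_left_mono[OF pb]) simp
    finally show ?thesis .
  qed
  have Kint: "set_integrable lborel {0..} (\<lambda>s. Kf u u1 s * y2 s)"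
    if cu: "continuous_on UNIV u" "continuous_on UNIV u1"
      and bu: "\<And>s. \<bar>u s\<bar> \<le> 1" "\<And>s. \<bar>u1 s\<bar> \<le> \<omega>" for u u1
  proof (rule set_integrable_bound_cont)
    have cu': "continuous_on {0..} u" "continuous_on {0..} u1"
      using cu continuous_on_subset by blast+
    show "continuous_on {0..} (\<lambda>s. Kf u u1 s * y2 s)"
      unfolding Kf_def by (intro continuous_intros cA cp p'_cont cu' cy2; simp)
    show "set_integrable lborel {0..} (\<lambda>s. C0 * \<bar>A s * y2 s\<bar> + M2 * \<bar>p' s\<bar>)"
      by (intro set_integral_add(1) set_integrable_mult_right iAy2 set_integrable_abs ip')
    show "\<bar>Kf u u1 s * y2 s\<bar> \<le> C0 * \<bar>A s * y2 s\<bar> + M2 * \<bar>p' s\<bar>" if "s \<ge> 0" for s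
      by (rule Kbound[of u u1 s, OF bu that])
  qed
  have bc: "\<bar>c s\<bar> \<le> 1" "\<bar>c1 s\<bar> \<le> \<omega>" "\<bar>sn s\<bar> \<le> 1" "\<bar>s1 s\<bar> \<le> \<omega>" for s
    using \<omega>_pos by (auto simp: c_def c1_def sn_def s1_def abs_mult)
  have cc: "continuous_on UNIV c" "continuous_on UNIV c1" "continuous_on UNIV sn" "continuous_on UNIV s1"
    unfolding c_def c1_def sn_def s1_def by (intro continuous_intros)+
  define JK where "JK = (LINT s:{0..}|lborel. \<bar>Kf c c1 s * y2 s\<bar>) + (LINT s:{0..}|lborel. \<bar>Kf sn s1 s * y2 s\<bar>)"
  have Rbound: "\<bar>Rf u u1 t\<bar> \<le> M2 * CH + (LINT s:{0..}|lborel. \<bar>Kf u u1 s * y2 s\<bar>)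
       + (LINT s:{0..t}|lborel. \<bar>q s\<bar> * \<bar>A s * x s\<bar>)"
    if cu: "continuous_on UNIV u" "continuous_on UNIV u1"
      and bu: "\<And>s. \<bar>u s\<bar> \<le> 1" "\<And>s. \<bar>u1 s\<bar> \<le> \<omega>" and t: "t \<ge> 0" for u u1 t
  proof -
    have cuT: "continuous_on {0..t} u" using cu continuous_on_subset by blast
    have h1: "\<bar>Hf u u1 t * y2 t\<bar> \<le> M2 * CH"
    proof -
      have "CH \<ge> 0" unfolding CH_def using p_pos[of 0] \<omega>_pos by simp
      then have "\<bar>A t * y2 t\<bar> * CH \<le> M2 * CH" by (rule mult_right_mono[OF M2[OF t]])
      then show ?thesis using Hbound[of u u1 t, OF bu t] by linarith
    qed
    have h2: "\<bar>LINT s:{0..t}|lborel. Kf u u1 s * y2 s\<bar> \<le> (LINT s:{0..}|lborel. \<bar>Kf u u1 s * y2 s\<bar>)"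
      by (rule abs_LINT_le_Ici[OF Kint[of u u1, OF cu bu] t])
    have h3: "\<bar>LINT s:{0..t}|lborel. A s * u s * (p s^2/4 + p' s/2) * x s\<bar> \<le> (LINT s:{0..t}|lborel. \<bar>q s\<bar> * \<bar>A s * x s\<bar>)"
    proof -
      have "\<bar>LINT s:{0..t}|lborel. A s * u s * (p s^2/4 + p' s/2) * x s\<bar> \<le> (LINT s:{0..t}|lborel. \<bar>A s * u s * (p s^2/4 + p' s/2) * x s\<bar>)"
        by (rule set_abs_bound)
      also have "\<dots> \<le> (LINT s:{0..t}|lborel. \<bar>q s\<bar> * \<bar>A s * x s\<bar>)"
      proof (rule set_integral_mono)
        show "set_integrable lborel {0..t} (\<lambda>s. \<bar>A s * u s * (p s^2/4 + p' s/2) * x s\<bar>)"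
          by (rule borel_integrable_atLeastAtMost') (intro continuous_intros cAT cpT cp'T cuT cxT; simp)
        show "set_integrable lborel {0..t} (\<lambda>s. \<bar>q s\<bar> * \<bar>A s * x s\<bar>)"
          by (rule borel_integrable_atLeastAtMost') (unfold q_def, intro continuous_intros cAT cpT cp'T cxT; simp)
        show "\<bar>A s * u s * (p s^2/4 + p' s/2) * x s\<bar> \<le> \<bar>q s\<bar> * \<bar>A s * x s\<bar>" for s
        proof -
          have "\<bar>A s * u s * (p s^2/4 + p' s/2) * x s\<bar> = \<bar>u s\<bar> * (\<bar>q s\<bar> * \<bar>A s * x s\<bar>)"
            by (simp add: q_def abs_mult)
          also have "\<dots> \<le> 1 * (\<bar>q s\<bar> * \<bar>A s * x s\<bar>)" by (rule mult_right_mono[OF bu(1)]) simp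
          finally show ?thesis by simp
        qed
      qed
      finally show ?thesis .
    qed
    show ?thesis unfolding Rf_def using h1 h2 h3 by linarith
  qed
  have Bineq: "\<bar>A t * x t\<bar> \<le> (2 * M2 * CH + JK) / \<omega> + (LINT s:{0..t}|lborel. (2 / \<omega> * \<bar>q s\<bar>) * \<bar>A s * x s\<bar>)"
    if t: "t \<ge> 0" for t
  proof -
    have "\<omega> * \<bar>A t * x t\<bar> = \<bar>\<omega> * (A t * x t)\<bar>" using \<omega>_pos by (simp add: abs_mult)
    also have "\<dots> = \<bar>sin (\<omega> * t) * Rf c c1 t - cos (\<omega> * t) * Rf sn s1 t\<bar>"
      by (simp only: Bid[OF t])
    also have "\<dots> \<le> \<bar>Rf c c1 t\<bar> + \<bar>Rf sn s1 t\<bar>"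
    proof -
      have "\<bar>sin (\<omega> * t) * Rf c c1 t\<bar> \<le> \<bar>Rf c c1 t\<bar>" by (simp add: abs_mult mult_left_le_one_le)
      moreover have "\<bar>cos (\<omega> * t) * Rf sn s1 t\<bar> \<le> \<bar>Rf sn s1 t\<bar>" by (simp add: abs_mult mult_left_le_one_le)
      ultimately show ?thesis by linarith
    qed
    also have "\<dots> \<le> 2 * M2 * CH + JK + 2 * (LINT s:{0..t}|lborel. \<bar>q s\<bar> * \<bar>A s * x s\<bar>)"
      using Rbound[of c c1 t, OF cc(1,2) bc(1,2) t] Rbound[of sn s1 t, OF cc(3,4) bc(3,4) t] unfolding JK_def by linarith
    finally have "\<omega> * \<bar>A t * x t\<bar> \<le> 2 * M2 * CH + JK + 2 * (LINT s:{0..t}|lborel. \<bar>q s\<bar> * \<bar>A s * x s\<bar>)" .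
    moreover have eqI: "(LINT s:{0..t}|lborel. (2 / \<omega> * \<bar>q s\<bar>) * \<bar>A s * x s\<bar>) = 2 / \<omega> * (LINT s:{0..t}|lborel. \<bar>q s\<bar> * \<bar>A s * x s\<bar>)"
      by (simp add: mult.assoc)
    ultimately have "\<bar>A t * x t\<bar> \<le> (2 * M2 * CH + JK + 2 * (LINT s:{0..t}|lborel. \<bar>q s\<bar> * \<bar>A s * x s\<bar>)) / \<omega>"
      using \<omega>_pos by (simp add: pos_le_divide_eq mult.commute)
    also have "\<dots> = (2 * M2 * CH + JK) / \<omega> + 2 / \<omega> * (LINT s:{0..t}|lborel. \<bar>q s\<bar> * \<bar>A s * x s\<bar>)"
      by (simp add: add_divide_distrib)
    finally show ?thesis by (simp only: eqI)
  qed
  obtain MB where MB: "\<And>t. t \<ge> 0 \<Longrightarrow> \<bar>A t * x t\<bar> \<le> MB"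
  proof -
    have "\<exists>M. \<forall>t\<ge>0. \<bar>A t * x t\<bar> \<le> M"
    proof (rule gronwall_bounded[where \<beta>="\<lambda>s. 2 / \<omega> * \<bar>q s\<bar>" and K="(2 * M2 * CH + JK) / \<omega>"])
      show "continuous_on {0..} (\<lambda>t. \<bar>A t * x t\<bar>)" by (intro continuous_intros cA cx)
      show "continuous_on {0..} (\<lambda>s. 2 / \<omega> * \<bar>q s\<bar>)" by (intro continuous_intros cq)
      show "0 \<le> 2 / \<omega> * \<bar>q s\<bar>" for s using \<omega>_pos by simp
      show "set_integrable lborel {0..} (\<lambda>s. 2 / \<omega> * \<bar>q s\<bar>)" by (intro set_integrable_mult_right iqa)
    qed (rule Bineq)
    then show ?thesis using that by blast
  qed
  have Qint: "set_integrable lborel {0..} (\<lambda>s. A s * u s * (p s^2/4 + p' s/2) * x s)"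
    if cu: "continuous_on UNIV u" and bu: "\<And>s. \<bar>u s\<bar> \<le> 1" for u
  proof (rule set_integrable_bound_cont)
    have cu': "continuous_on {0..} u" using cu continuous_on_subset by blast
    show "continuous_on {0..} (\<lambda>s. A s * u s * (p s^2/4 + p' s/2) * x s)"
      by (intro continuous_intros cA cp p'_cont cu' cx; simp)
    show "set_integrable lborel {0..} (\<lambda>s. MB * \<bar>q s\<bar>)" by (intro set_integrable_mult_right iqa)
    show "\<bar>A s * u s * (p s^2/4 + p' s/2) * x s\<bar> \<le> MB * \<bar>q s\<bar>" if "s \<ge> 0" for s
    proof -
      have "\<bar>A s * u s * (p s^2/4 + p' s/2) * x s\<bar> = \<bar>u s\<bar> * (\<bar>q s\<bar> * \<bar>A s * x s\<bar>)"
        by (simp add: q_def abs_mult)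
      also have "\<dots> \<le> 1 * (\<bar>q s\<bar> * \<bar>A s * x s\<bar>)" by (rule mult_right_mono[OF bu]) simp
      also have "\<dots> \<le> \<bar>q s\<bar> * MB" using MB[OF that] by (simp add: mult_left_mono)
      finally show ?thesis by (simp add: mult.commute)
    qed
  qed
  define Lf where "Lf u u1 = (LINT s:{0..}|lborel. Kf u u1 s * y2 s)
      + (LINT s:{0..}|lborel. A s * u s * (p s^2/4 + p' s/2) * x s)" for u u1 :: "real \<Rightarrow> real"
  have Rlim: "(Rf u u1 \<longlongrightarrow> Lf u u1) at_top"
    if cu: "continuous_on UNIV u" "continuous_on UNIV u1"
      and bu: "\<And>s. \<bar>u s\<bar> \<le> 1" "\<And>s. \<bar>u1 s\<bar> \<le> \<omega>" for u u1
  proof -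
    have h: "((\<lambda>t. Hf u u1 t * y2 t) \<longlongrightarrow> 0) at_top"
    proof (rule Lim_null_comparison[where g="\<lambda>t. \<bar>A t * y2 t\<bar> * CH"])
      show "\<forall>\<^sub>F t in at_top. norm (Hf u u1 t * y2 t) \<le> \<bar>A t * y2 t\<bar> * CH"
        using eventually_ge_at_top[of "0::real"]
        by eventually_elim (simp add: Hbound[of u u1, OF bu])
      show "((\<lambda>t. \<bar>A t * y2 t\<bar> * CH) \<longlongrightarrow> 0) at_top"
        by (rule tendsto_mult_left_zero[OF tendsto_rabs_zero[OF Ay2lim]])
    qed
    have i1: "((\<lambda>t. LINT s:{0..t}|lborel. Kf u u1 s * y2 s) \<longlongrightarrow> (LINT s:{0..}|lborel. Kf u u1 s * y2 s)) at_top"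
      by (rule tendsto_set_lebesgue_integral_at_top) (use Kint[of u u1, OF cu bu] in auto)
    have i2: "((\<lambda>t. LINT s:{0..t}|lborel. A s * u s * (p s^2/4 + p' s/2) * x s)
        \<longlongrightarrow> (LINT s:{0..}|lborel. A s * u s * (p s^2/4 + p' s/2) * x s)) at_top"
      by (rule tendsto_set_lebesgue_integral_at_top) (use Qint[of u, OF cu(1) bu(1)] in auto)
    have "((\<lambda>t. - (Hf u u1 t * y2 t) + (LINT s:{0..t}|lborel. Kf u u1 s * y2 s)
        + (LINT s:{0..t}|lborel. A s * u s * (p s^2/4 + p' s/2) * x s)) \<longlongrightarrow> - 0 + (LINT s:{0..}|lborel. Kf u u1 s * y2 s)
        + (LINT s:{0..}|lborel. A s * u s * (p s^2/4 + p' s/2) * x s)) at_top"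
      by (intro tendsto_add tendsto_minus h i1 i2)
    then show ?thesis by (simp add: Rf_def[abs_def] Lf_def)
  qed
  define Lc where "Lc = Lf c c1"
  define Ls where "Ls = Lf sn s1"
  have conv: "((\<lambda>t. \<omega> * (A t * x t) - (sin (\<omega> * t) * Lc - cos (\<omega> * t) * Ls)) \<longlongrightarrow> 0) at_top"
  proof (rule Lim_null_comparison[where g="\<lambda>t. \<bar>Rf c c1 t - Lc\<bar> + \<bar>Rf sn s1 t - Ls\<bar>"])
    show "\<forall>\<^sub>F t in at_top. norm (\<omega> * (A t * x t) - (sin (\<omega> * t) * Lc - cos (\<omega> * t) * Ls)) \<le> \<bar>Rf c c1 t - Lc\<bar> + \<bar>Rf sn s1 t - Ls\<bar>"
      using eventually_ge_at_top[of "0::real"]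
    proof eventually_elim
      case (elim t)
      have "\<omega> * (A t * x t) - (sin (\<omega> * t) * Lc - cos (\<omega> * t) * Ls)
          = sin (\<omega> * t) * (Rf c c1 t - Lc) - cos (\<omega> * t) * (Rf sn s1 t - Ls)"
        using Bid[OF elim] by (simp add: algebra_simps)
      moreover have "\<bar>sin (\<omega> * t) * (Rf c c1 t - Lc)\<bar> \<le> \<bar>Rf c c1 t - Lc\<bar>" by (simp add: abs_mult mult_left_le_one_le)
      moreover have "\<bar>cos (\<omega> * t) * (Rf sn s1 t - Ls)\<bar> \<le> \<bar>Rf sn s1 t - Ls\<bar>" by (simp add: abs_mult mult_left_le_one_le)
      ultimately show ?case unfolding real_norm_def by linarith
    qed
    have "((\<lambda>t. Rf c c1 t - Lc) \<longlongrightarrow> 0) at_top"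
      using LIM_zero[OF Rlim[of c c1, OF cc(1,2) bc(1,2)]] by (simp add: Lc_def)
    moreover have "((\<lambda>t. Rf sn s1 t - Ls) \<longlongrightarrow> 0) at_top"
      using LIM_zero[OF Rlim[of sn s1, OF cc(3,4) bc(3,4)]] by (simp add: Ls_def)
    ultimately show "((\<lambda>t. \<bar>Rf c c1 t - Lc\<bar> + \<bar>Rf sn s1 t - Ls\<bar>) \<longlongrightarrow> 0) at_top"
      by (intro tendsto_add_zero tendsto_rabs_zero)
  qed
  show ?thesis
  proof (intro exI)
    show "(\<lambda>t. x t - (Lc / \<omega> * sin (\<omega> * t) + - Ls / \<omega> * cos (\<omega> * t)) / Afun p t) \<in> o[at_top](\<lambda>t. 1 / Afun p t)"
    proof (rule smalloI_tendsto)
      show "\<forall>\<^sub>F t in at_top. 1 / Afun p t \<noteq> 0"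
        using A_pos by (simp add: A_def less_imp_neq[symmetric])
      have eq: "(x t - (Lc / \<omega> * sin (\<omega> * t) + - Ls / \<omega> * cos (\<omega> * t)) / Afun p t) / (1 / Afun p t)
          = (\<omega> * (A t * x t) - (sin (\<omega> * t) * Lc - cos (\<omega> * t) * Ls)) / \<omega>" for t
        using A_pos[of t] \<omega>_pos unfolding A_def by (simp add: field_simps)
      show "((\<lambda>t. (x t - (Lc / \<omega> * sin (\<omega> * t) + - Ls / \<omega> * cos (\<omega> * t)) / Afun p t) / (1 / Afun p t)) \<longlongrightarrow> 0) at_top"
        unfolding eq by (rule tendsto_divide_zero[OF conv])
    qed
  qed
qed

end
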